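(* In the FAVANO process, for every time step $t\ge0$, $$\mathbb{E}\|\mu_{t+1}-\mu_t\|^2\le\frac{s^2\eta^2}{n(n+1)^2}\sum_{i=1}^n\mathbb{E}\big\|\check h^i_{t+1}\big\|^2 .$$
   Context: FAVANO process. Fix integers $n\ge1$, $1\le s\le n$, $K\ge1$, $d\ge1$, a step size $\eta>0$ and differentiable $f_1,\dots,f_n:\mathbb{R}^d\to\mathbb{R}$, $f=\frac1n\sum_i f_i$. All random variables live on one probability space. For each client $i$ a stochastic gradient oracle returns, at a query point $x$, $\widetilde g^i(x)=\nabla f_i(x)+\xi$ where, conditionally on everything generated before the query (including $x$), $\xi$ has mean zero (each query uses fresh noise). Initialize $w_0\in\mathbb{R}^d$ deterministic and $w_0^i=w_0$ for all $i$. For each $t\ge1$, each client $i$ and each $q\ge1$ define recursively $\widetilde h^i_{t,q}=\widetilde g^i\big(w^i_{t-1}-\eta\sum_{r=1}^{q-1}\widetilde h^i_{t,r}\big)$. At each $t\ge1$ there are random integers $E^1_t,\dots,E^n_t\ge0$ with $\mathbf{P}(E^i_t>0)>0$, and a random subset $\mathcal{S}_t\subseteq\{1,\dots,n\}$ uniformly distributed among subsets of size $s$; the family $(\mathcal S_t,E^1_t,\dots,E^n_t)$ is independent of all the other randomness (the past up to time $t-1$ and all $\widetilde h^i_{t,q}$), and $\mathcal S_t$ is independent of $(E^i_t)_i$. The weight $\alpha^i_t$ is either $\mathbf{P}(E^i_t>0)\,(E^i_t\wedge K)$ (stochastic version) or $\mathbb{E}[E^i_t\wedge K]$ (deterministic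 version), where $a\wedge b=\min(a,b)$. Set $\check h^i_t=\frac{1}{\alpha^i_t}\sum_{q=1}^{E^i_t\wedge K}\widetilde h^i_{t,q}$ if $E^i_t>0$ and $\check h^i_t=0$ otherwise. Updates: $w_t=\frac{1}{s+1}\big(w_{t-1}+\sum_{i\in\mathcal S_t}(w^i_{t-1}-\eta\check h^i_t)\big)$; $w^i_t=w_t$ for $i\in\mathcal S_t$ and $w^i_t=w^i_{t-1}$ for $i\notin\mathcal S_t$. Define $\mu_t=\frac{1}{n+1}\big(w_t+\sum_{i=1}^n w^i_t\big)$. All expectations appearing are assumed finite. *)

theory Defs
  imports "HOL-Probability.Probability"
begin

definition ev_of :: "'a measure \<Rightarrow> ('a \<Rightarrow> 'b) \<Rightarrow> 'b measure \<Rightarrow> 'a set set" where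
  "ev_of M X N = {X -` B \<inter> space M | B. B \<in> sets N}"

definition fav_alpha :: "'a measure \<Rightarrow> nat \<Rightarrow> bool \<Rightarrow> (nat \<Rightarrow> nat \<Rightarrow> 'a \<Rightarrow> nat)
    \<Rightarrow> nat \<Rightarrow> nat \<Rightarrow> 'a \<Rightarrow> real" where
  "fav_alpha M K stoch E t i \<omega> =
     (if stoch then measure M {\<omega>'\<in>space M. 0 < E t i \<omega>'} * real (min (E t i \<omega>) K)
      else integral\<^sup>L M (\<lambda>\<omega>'. real (min (E t i \<omega>') K)))"

text \<open>check h^i_t; h t i q is the q-th stochastic gradient of client i in round t.\<close>
definition fav_hcheck :: "'a measure \<Rightarrow> nat \<Rightarrow> bool \<Rightarrow> (nat \<Rightarrow> nat \<Rightarrow> 'a \<Rightarrow> nat)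
    \<Rightarrow> (nat \<Rightarrow> nat \<Rightarrow> nat \<Rightarrow> 'a \<Rightarrow> 'v::euclidean_space) \<Rightarrow> nat \<Rightarrow> nat \<Rightarrow> 'a \<Rightarrow> 'v" where
  "fav_hcheck M K stoch E h t i \<omega> =
     (if 0 < E t i \<omega>
      then (1 / fav_alpha M K stoch E t i \<omega>) *\<^sub>R (\<Sum>q\<in>{1..min (E t i \<omega>) K}. h t i q \<omega>)
      else 0)"

text \<open>State at time t: (server model w_t, client models i \<mapsto> w^i_t).\<close>
primrec fav_state :: "'a measure \<Rightarrow> nat \<Rightarrow> nat \<Rightarrow> real \<Rightarrow> bool \<Rightarrow> 'v::euclidean_space
    \<Rightarrow> (nat \<Rightarrow> nat \<Rightarrow> 'a \<Rightarrow> nat) \<Rightarrow> (nat \<Rightarrow> 'a \<Rightarrow> nat set)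
    \<Rightarrow> (nat \<Rightarrow> nat \<Rightarrow> nat \<Rightarrow> 'a \<Rightarrow> 'v) \<Rightarrow> nat \<Rightarrow> 'a \<Rightarrow> 'v \<times> (nat \<Rightarrow> 'v)" where
  "fav_state M s K eta stoch w0 E S h 0 \<omega> = (w0, \<lambda>i. w0)"
| "fav_state M s K eta stoch w0 E S h (Suc t) \<omega> =
     (let w = fst (fav_state M s K eta stoch w0 E S h t \<omega>);
          wc = snd (fav_state M s K eta stoch w0 E S h t \<omega>);
          wn = (1 / (real s + 1)) *\<^sub>R
                 (w + (\<Sum>i\<in>S (Suc t) \<omega>. (wc i - eta *\<^sub>R fav_hcheck M K stoch E h (Suc t) i \<omega>)))
      in (wn, \<lambda>i. if i \<in> S (Suc t) \<omega> then wn else wc i))"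

definition fav_mu :: "'a measure \<Rightarrow> nat \<Rightarrow> nat \<Rightarrow> nat \<Rightarrow> real \<Rightarrow> bool \<Rightarrow> 'v::euclidean_space
    \<Rightarrow> (nat \<Rightarrow> nat \<Rightarrow> 'a \<Rightarrow> nat) \<Rightarrow> (nat \<Rightarrow> 'a \<Rightarrow> nat set)
    \<Rightarrow> (nat \<Rightarrow> nat \<Rightarrow> nat \<Rightarrow> 'a \<Rightarrow> 'v) \<Rightarrow> nat \<Rightarrow> 'a \<Rightarrow> 'v" where
  "fav_mu M n s K eta stoch w0 E S h t \<omega> =
     (1 / (real n + 1)) *\<^sub>R (fst (fav_state M s K eta stoch w0 E S h t \<omega>)
        + (\<Sum>i\<in>{1..n}. snd (fav_state M s K eta stoch w0 E S h t \<omega>) i))"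

text \<open>Query point of the q-th local step of client i in round t (t \<ge> 1).\<close>
definition fav_query :: "'a measure \<Rightarrow> nat \<Rightarrow> nat \<Rightarrow> real \<Rightarrow> bool \<Rightarrow> 'v::euclidean_space
    \<Rightarrow> (nat \<Rightarrow> nat \<Rightarrow> 'a \<Rightarrow> nat) \<Rightarrow> (nat \<Rightarrow> 'a \<Rightarrow> nat set)
    \<Rightarrow> (nat \<Rightarrow> nat \<Rightarrow> nat \<Rightarrow> 'a \<Rightarrow> 'v) \<Rightarrow> nat \<Rightarrow> nat \<Rightarrow> nat \<Rightarrow> 'a \<Rightarrow> 'v" where
  "fav_query M s K eta stoch w0 E S h t i q \<omega> =
     snd (fav_state M s K eta stoch w0 E S h (t - 1) \<omega>) i - eta *\<^sub>R (\<Sum>r\<in>{1..<q}. h t i r \<omega>)"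

text \<open>Generators of the sigma-algebra of the randomness up to time t-1:
  S_r, E^i_r and all stochastic gradients of rounds r < t.\<close>
definition fav_past_gen :: "'a measure \<Rightarrow> nat \<Rightarrow> (nat \<Rightarrow> nat \<Rightarrow> 'a \<Rightarrow> nat) \<Rightarrow> (nat \<Rightarrow> 'a \<Rightarrow> nat set)
    \<Rightarrow> (nat \<Rightarrow> nat \<Rightarrow> nat \<Rightarrow> 'a \<Rightarrow> 'v::euclidean_space) \<Rightarrow> nat \<Rightarrow> 'a set set" where
  "fav_past_gen M n E S h t =
     (\<Union>r\<in>{1..<t}. ev_of M (S r) (count_space UNIV)
        \<union> (\<Union>i\<in>{1..n}. ev_of M (E r i) (count_space UNIV))
        \<union> (\<Union>i\<in>{1..n}. \<Union>q\<in>{1..}. ev_of M (h r i q) borel))"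

definition fav_now_gen :: "'a measure \<Rightarrow> nat \<Rightarrow> (nat \<Rightarrow> nat \<Rightarrow> 'a \<Rightarrow> nat) \<Rightarrow> (nat \<Rightarrow> 'a \<Rightarrow> nat set)
    \<Rightarrow> nat \<Rightarrow> 'a set set" where
  "fav_now_gen M n E S t =
     ev_of M (S t) (count_space UNIV) \<union> (\<Union>i\<in>{1..n}. ev_of M (E t i) (count_space UNIV))"

definition fav_other_gen :: "'a measure \<Rightarrow> nat \<Rightarrow> (nat \<Rightarrow> nat \<Rightarrow> 'a \<Rightarrow> nat) \<Rightarrow> (nat \<Rightarrow> 'a \<Rightarrow> nat set)
    \<Rightarrow> (nat \<Rightarrow> nat \<Rightarrow> nat \<Rightarrow> 'a \<Rightarrow> 'v::euclidean_space) \<Rightarrow> nat \<Rightarrow> 'a set set" where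
  "fav_other_gen M n E S h t =
     fav_past_gen M n E S h t \<union> (\<Union>i\<in>{1..n}. \<Union>q\<in>{1..}. ev_of M (h t i q) borel)"

text \<open>Generators of the information available before the q-th query of client i in round t:
  the past up to t-1 and the previous answers h t i r, r < q, of that client.\<close>
definition fav_query_gen :: "'a measure \<Rightarrow> nat \<Rightarrow> (nat \<Rightarrow> nat \<Rightarrow> 'a \<Rightarrow> nat) \<Rightarrow> (nat \<Rightarrow> 'a \<Rightarrow> nat set)
    \<Rightarrow> (nat \<Rightarrow> nat \<Rightarrow> nat \<Rightarrow> 'a \<Rightarrow> 'v::euclidean_space) \<Rightarrow> nat \<Rightarrow> nat \<Rightarrow> nat \<Rightarrow> 'a set set" where
  "fav_query_gen M n E S h t i q =
     fav_past_gen M n E S h t \<union> (\<Union>r\<in>{1..<q}. ev_of M (h t i r) borel)"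

end

theory Submission imports Defs begin

lemma sigma_sets_Int2:
  "G \<subseteq> Pow \<Omega> \<Longrightarrow> a \<in> sigma_sets \<Omega> G \<Longrightarrow> b \<in> sigma_sets \<Omega> G \<Longrightarrow> a \<inter> b \<in> sigma_sets \<Omega> G"
  using sets.Int[of a "sigma \<Omega> G" b] by simp

lemma hcheck_meas:
  assumes "E t i \<in> measurable N (count_space UNIV)" "\<forall>q\<ge>1. h t i q \<in> borel_measurable N"
  shows "(\<lambda>\<omega>. fav_hcheck M K stoch E h t i \<omega>) \<in> borel_measurable N"
proof -
  define a where "a k = (if stoch then measure M {\<omega>'\<in>space M. 0 < E t i \<omega>'} * real (min k K)
      else integral\<^sup>L M (\<lambda>\<omega>'. real (min (E t i \<omega>') K)))" for k
  define F where "F k \<omega> = (if 0 < k then (1 / a k) *\<^sub>R (\<Sum>q\<in>{1..min k K}. h t i q \<omega>) else 0)" for k \<omega>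
  have eq: "fav_hcheck M K stoch E h t i \<omega> = F (E t i \<omega>) \<omega>" for \<omega>
    unfolding fav_hcheck_def F_def a_def fav_alpha_def by simp
  have "(\<lambda>\<omega>. F (E t i \<omega>) \<omega>) \<in> borel_measurable N"
  proof (rule measurable_compose_countable'[OF _ assms(1)])
    fix k :: nat
    have "(\<lambda>\<omega>. \<Sum>q\<in>{1..min k K}. h t i q \<omega>) \<in> borel_measurable N"
      using assms(2) by (intro borel_measurable_sum) auto
    then show "(\<lambda>\<omega>. F k \<omega>) \<in> borel_measurable N"
      unfolding F_def by (cases "0 < k") auto
  qed auto
  then show ?thesis by (simp add: eq)
qed

lemma norm_sum_sq_le:
  fixes x :: "nat \<Rightarrow> 'v::real_normed_vector"
  assumes "finite A"
  shows "(norm (\<Sum>i\<in>A. x i))\<^sup>2 \<le> real (card A) * (\<Sum>i\<in>A. (norm (x i))\<^sup>2)"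
proof -
  have "(norm (\<Sum>i\<in>A. x i))\<^sup>2 \<le> (\<Sum>i\<in>A. norm (x i))\<^sup>2"
    by (intro power_mono norm_sum) auto
  also have "\<dots> \<le> (\<Sum>i\<in>A. (norm (x i))\<^sup>2) * card A"
    by (rule sum_squared_le_sum_of_squares)
  finally show ?thesis by (simp add: mult.commute)
qed

lemma diff_alg:
  fixes w :: "'v::real_vector"
  assumes "finite N" "T \<subseteq> N" "card T = s"
  shows "((1 / (real s + 1)) *\<^sub>R (w + (\<Sum>i\<in>T. (wc i - eta *\<^sub>R H i)))
          + (\<Sum>i\<in>N. if i \<in> T then (1 / (real s + 1)) *\<^sub>R (w + (\<Sum>i\<in>T. (wc i - eta *\<^sub>R H i))) else wc i))
        - (w + (\<Sum>i\<in>N. wc i)) = - (eta *\<^sub>R (\<Sum>i\<in>T. H i))"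
proof -
  define wn where "wn = (1 / (real s + 1)) *\<^sub>R (w + (\<Sum>i\<in>T. (wc i - eta *\<^sub>R H i)))"
  have fT: "finite T" using assms finite_subset by blast
  have 1: "(\<Sum>i\<in>N. if i \<in> T then wn else wc i) = real s *\<^sub>R wn + (\<Sum>i\<in>N - T. wc i)"
    using assms fT by (simp add: sum.If_cases Int_absorb1 Diff_eq[symmetric] Int_commute sum_constant_scaleR)
  have 2: "(\<Sum>i\<in>N. wc i) = (\<Sum>i\<in>T. wc i) + (\<Sum>i\<in>N - T. wc i)"
    using assms by (metis add.commute sum.subset_diff)
  have 3: "(real s + 1) *\<^sub>R wn = w + (\<Sum>i\<in>T. wc i) - eta *\<^sub>R (\<Sum>i\<in>T. H i)"
    unfolding wn_def by (simp add: sum_subtractf scaleR_sum_right add_diff_eq)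
  have "wn + real s *\<^sub>R wn = (real s + 1) *\<^sub>R wn" by (simp add: algebra_simps)
  then show ?thesis unfolding wn_def[symmetric] 1 2 using 3 by (simp add: algebra_simps)
qed
theorem mainTheorem10:
  fixes M :: "'a measure" and n s K :: nat and eta :: real and stoch :: bool
    and w0 :: "'v::euclidean_space" and f :: "nat \<Rightarrow> 'v \<Rightarrow> real" and gradf :: "nat \<Rightarrow> 'v \<Rightarrow> 'v"
    and E :: "nat \<Rightarrow> nat \<Rightarrow> 'a \<Rightarrow> nat" and S :: "nat \<Rightarrow> 'a \<Rightarrow> nat set"
    and h :: "nat \<Rightarrow> nat \<Rightarrow> nat \<Rightarrow> 'a \<Rightarrow> 'v" and t :: nat
  assumes P: "prob_space M"
    and n_pos: "1 \<le> n" and s_bounds: "1 \<le> s" "s \<le> n" and K_pos: "1 \<le> K" and eta_pos: "0 < eta"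
    and grad: "\<forall>i\<in>{1..n}. \<forall>x. GDERIV (f i) x :> gradf i x"
    and S_meas: "\<forall>r\<ge>1. S r \<in> measurable M (count_space UNIV)"
    and S_unif: "\<forall>r\<ge>1. \<forall>A. A \<subseteq> {1..n} \<and> card A = s \<longrightarrow>
                   measure M {\<omega>\<in>space M. S r \<omega> = A} = 1 / real (n choose s)"
    and E_meas: "\<forall>r\<ge>1. \<forall>i\<in>{1..n}. E r i \<in> measurable M (count_space UNIV)"
    and E_pos: "\<forall>r\<ge>1. \<forall>i\<in>{1..n}. 0 < measure M {\<omega>\<in>space M. 0 < E r i \<omega>}"
    and h_meas: "\<forall>r\<ge>1. \<forall>i\<in>{1..n}. \<forall>q\<ge>1. h r i q \<in> borel_measurable M"
    and noise_mean_zero: "\<forall>r\<ge>1. \<forall>i\<in>{1..n}. \<forall>q\<ge>1.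
         integrable M (\<lambda>\<omega>. h r i q \<omega> - gradf i (fav_query M s K eta stoch w0 E S h r i q \<omega>)) \<and>
         (\<forall>A\<in>sigma_sets (space M) (fav_query_gen M n E S h r i q).
            set_lebesgue_integral M A
              (\<lambda>\<omega>. h r i q \<omega> - gradf i (fav_query M s K eta stoch w0 E S h r i q \<omega>)) = 0)"
    and indep_other: "\<forall>r\<ge>1. prob_space.indep_set M
         (sigma_sets (space M) (fav_now_gen M n E S r))
         (sigma_sets (space M) (fav_other_gen M n E S h r))"
    and indep_SE: "\<forall>r\<ge>1. prob_space.indep_set M
         (sigma_sets (space M) (ev_of M (S r) (count_space UNIV)))
         (sigma_sets (space M) (\<Union>i\<in>{1..n}. ev_of M (E r i) (count_space UNIV)))"
    and finite_exp: "\<forall>r\<ge>1. \<forall>i\<in>{1..n}.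
         integrable M (\<lambda>\<omega>. (norm (fav_hcheck M K stoch E h r i \<omega>))\<^sup>2)"
  shows "integral\<^sup>L M (\<lambda>\<omega>. (norm (fav_mu M n s K eta stoch w0 E S h (Suc t) \<omega>
                                  - fav_mu M n s K eta stoch w0 E S h t \<omega>))\<^sup>2)
         \<le> (real s ^ 2 * eta ^ 2 / (real n * (real n + 1) ^ 2)) *
            (\<Sum>i\<in>{1..n}. integral\<^sup>L M (\<lambda>\<omega>. (norm (fav_hcheck M K stoch E h (Suc t) i \<omega>))\<^sup>2))"
proof -
  interpret prob_space M by (rule P)
  define r where "r = Suc t"
  have r1: "r \<ge> 1" by (simp add: r_def)
  define \<Omega> where "\<Omega> = space M"
  define U where "U = {B. B \<subseteq> {1..n} \<and> card B = s}"
  define A where "A i = {\<omega>\<in>\<Omega>. i \<in> S r \<omega>}" for i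
  define Y where "Y i \<omega> = (norm (fav_hcheck M K stoch E h r i \<omega>))\<^sup>2" for i \<omega>
  have Sm[measurable]: "S r \<in> measurable M (count_space UNIV)" using S_meas r1 by blast
  have Cpos: "0 < n choose s" using s_bounds by simp
  have finU: "finite U" unfolding U_def by (rule finite_subset[of _ "Pow {1..n}"]) auto
  have cardU: "card U = n choose s" unfolding U_def using n_subsets[of "{1..n}" s] by simp
  have evB: "{\<omega>\<in>\<Omega>. S r \<omega> = B} \<in> events" for B unfolding \<Omega>_def by measurable
  have evV: "{\<omega>\<in>\<Omega>. S r \<omega> \<in> V} \<in> events" for V
  proof -
    have "S r -` V \<inter> space M \<in> events" by (rule measurable_sets[OF Sm]) simp
    moreover have "S r -` V \<inter> space M = {\<omega>\<in>\<Omega>. S r \<omega> \<in> V}" unfolding \<Omega>_def by auto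
    ultimately show ?thesis by simp
  qed
  have probV: "prob {\<omega>\<in>\<Omega>. S r \<omega> \<in> V} = real (card V) / real (n choose s)" if "V \<subseteq> U" for V
  proof -
    have fV: "finite V" using finU that finite_subset by blast
    have "{\<omega>\<in>\<Omega>. S r \<omega> \<in> V} = (\<Union>B\<in>V. {\<omega>\<in>\<Omega>. S r \<omega> = B})" by auto
    then have "prob {\<omega>\<in>\<Omega>. S r \<omega> \<in> V} = (\<Sum>B\<in>V. prob {\<omega>\<in>\<Omega>. S r \<omega> = B})"
      using fV evB by (simp, intro measure_finite_Union) (auto simp: disjoint_family_on_def emeasure_eq_measure)
    also have "\<dots> = (\<Sum>B\<in>V. 1 / real (n choose s))"
      using that S_unif r1 unfolding U_def \<Omega>_def by (intro sum.cong) auto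
    finally show ?thesis by simp
  qed
  have AEU: "AE \<omega> in M. S r \<omega> \<in> U"
  proof -
    have "prob {\<omega>\<in>\<Omega>. S r \<omega> \<in> U} = 1" using probV[of U] cardU Cpos by simp
    then have "AE \<omega> in M. \<omega> \<in> {\<omega>\<in>\<Omega>. S r \<omega> \<in> U}" using AE_in_set_eq_1 evV by blast
    then show ?thesis unfolding \<Omega>_def by auto
  qed
  have probA: "prob (A i) = real s / real n" if i: "i \<in> {1..n}" for i
  proof -
    define V where "V = {B\<in>U. i \<notin> B}"
    have V_eq: "V = {B. B \<subseteq> {1..n} - {i} \<and> card B = s}" unfolding V_def U_def by auto
    have cardV: "card V = (n - 1) choose s" unfolding V_eq using n_subsets[of "{1..n} - {i}" s] i by simp
    have "prob (\<Omega> - A i) = prob {\<omega>\<in>\<Omega>. S r \<omega> \<in> V}"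
    proof (rule measure_eq_AE)
      show "AE x in M. (x \<in> \<Omega> - A i) = (x \<in> {\<omega> \<in> \<Omega>. S r \<omega> \<in> V})"
        using AEU by eventually_elim (auto simp: A_def V_def)
      have "\<Omega> - A i = {\<omega>\<in>\<Omega>. S r \<omega> \<in> {B. i \<notin> B}}" unfolding A_def by auto
      then show "\<Omega> - A i \<in> events" using evV[of "{B. i \<notin> B}"] by (simp only:)
    qed (rule evV)
    also have "\<dots> = real ((n - 1) choose s) / real (n choose s)"
      using probV[of V] cardV by (simp add: V_def)
    finally have c: "prob (\<Omega> - A i) = real ((n - 1) choose s) / real (n choose s)" .
    have Aev: "A i \<in> events" using evV[of "{B. i \<in> B}"] unfolding A_def by (simp only: mem_Collect_eq)
    have "real (n - s) * real (n choose s) = real n * real ((n - 1) choose s)"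
      using binomial_absorb_comp[of n s] by (metis of_nat_mult)
    then have "real ((n - 1) choose s) / real (n choose s) = (real n - real s) / real n"
      using Cpos n_pos s_bounds by (simp add: field_simps of_nat_diff)
    then have "prob (A i) = 1 - (real n - real s) / real n"
      using c prob_compl[OF Aev] unfolding \<Omega>_def by linarith
    then show ?thesis using n_pos by (simp add: field_simps)
  qed
  have indepY: "integral\<^sup>L M (\<lambda>\<omega>. indicator (A i) \<omega> * Y i \<omega>) = prob (A i) * integral\<^sup>L M (Y i)
      \<and> integrable M (\<lambda>\<omega>. indicator (A i) \<omega> * Y i \<omega>)" if i: "i \<in> {1..n}" for i
  proof -
    define GS where "GS = ev_of M (S r) (count_space UNIV)"
    define GE where "GE = (\<Union>j\<in>{1..n}. ev_of M (E r j) (count_space UNIV))"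
    define GO where "GO = fav_other_gen M n E S h r"
    define Gi where "Gi = ev_of M (E r i) (count_space UNIV) \<union> (\<Union>q\<in>{1..}. ev_of M (h r i q) borel)"
    define C where "C = {b1 \<inter> b2 | b1 b2. b1 \<in> sigma_sets \<Omega> GE \<and> b2 \<in> sigma_sets \<Omega> GO}"
    have ind1: "indep_set (sigma_sets \<Omega> (GS \<union> GE)) (sigma_sets \<Omega> GO)"
      using indep_other r1 unfolding GS_def GE_def GO_def fav_now_gen_def \<Omega>_def by auto
    have ind2: "indep_set (sigma_sets \<Omega> GS) (sigma_sets \<Omega> GE)"
      using indep_SE r1 unfolding GS_def GE_def \<Omega>_def by auto
    have ev1: "sigma_sets \<Omega> (GS \<union> GE) \<subseteq> events" using indep_setD_ev1[OF ind1] .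
    have ev2: "sigma_sets \<Omega> GO \<subseteq> events" using indep_setD_ev2[OF ind1] .
    have ev3: "sigma_sets \<Omega> GS \<subseteq> events" using indep_setD_ev1[OF ind2] .
    have ev4: "sigma_sets \<Omega> GE \<subseteq> events" using indep_setD_ev2[OF ind2] .
    have evPow: "events \<subseteq> Pow \<Omega>" unfolding \<Omega>_def using sets.sets_into_space by blast
    have PGS: "GS \<subseteq> Pow \<Omega>" "GE \<subseteq> Pow \<Omega>" "GO \<subseteq> Pow \<Omega>" "Gi \<subseteq> Pow \<Omega>"
      unfolding GS_def GE_def GO_def Gi_def ev_of_def \<Omega>_def
      using ev2 evPow[unfolded \<Omega>_def] unfolding GO_def \<Omega>_def by auto
    have PGSE: "GS \<union> GE \<subseteq> Pow \<Omega>" using PGS by auto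
    have AiGS: "A i \<in> sigma_sets \<Omega> GS"
    proof (rule sigma_sets.Basic)
      have "A i = S r -` {B. i \<in> B} \<inter> space M" unfolding A_def \<Omega>_def by auto
      then show "A i \<in> GS" unfolding GS_def ev_of_def by (intro CollectI exI[of _ "{B. i \<in> B}"]) simp
    qed
    have Aev: "A i \<in> events" using AiGS ev3 by blast
    have AiSE: "A i \<in> sigma_sets \<Omega> (GS \<union> GE)" using AiGS sigma_sets_mono'[of GS "GS \<union> GE" \<Omega>] by blast
    have indAC: "indep_set {A i} C"
    proof (rule indep_setI)
      show "{A i} \<subseteq> events" using Aev by simp
      show "C \<subseteq> events" unfolding C_def using ev2 ev4 by blast
      fix a b assume a: "a \<in> {A i}" and b: "b \<in> C"
      then obtain b1 b2 where bb: "b = b1 \<inter> b2" and b1: "b1 \<in> sigma_sets \<Omega> GE" and b2: "b2 \<in> sigma_sets \<Omega> GO"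
        unfolding C_def by blast
      have B1: "b1 \<in> sigma_sets \<Omega> (GS \<union> GE)" using b1 sigma_sets_mono'[of GE "GS \<union> GE" \<Omega>] by blast
      have AB1: "A i \<inter> b1 \<in> sigma_sets \<Omega> (GS \<union> GE)" by (rule sigma_sets_Int2[OF PGSE AiSE B1])
      have "prob (A i \<inter> (b1 \<inter> b2)) = prob ((A i \<inter> b1) \<inter> b2)" by (simp add: Int_assoc)
      also have "\<dots> = prob (A i \<inter> b1) * prob b2" by (rule indep_setD[OF ind1 AB1 b2])
      also have "\<dots> = prob (A i) * prob b1 * prob b2" using indep_setD[OF ind2 AiGS b1] by simp
      also have "\<dots> = prob (A i) * prob (b1 \<inter> b2)" using indep_setD[OF ind1 B1 b2] by simp
      finally show "prob (a \<inter> b) = prob a * prob b" using a bb by simp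
    qed
    have stC: "Int_stable C"
      unfolding Int_stable_def
    proof (intro ballI)
      fix a b assume "a \<in> C" "b \<in> C"
      then obtain a1 a2 b1 b2 where ab: "a = a1 \<inter> a2" "b = b1 \<inter> b2" and h1: "a1 \<in> sigma_sets \<Omega> GE" and h2: "a2 \<in> sigma_sets \<Omega> GO"
        and h3: "b1 \<in> sigma_sets \<Omega> GE" and h4: "b2 \<in> sigma_sets \<Omega> GO" unfolding C_def by blast
      have e: "a \<inter> b = (a1 \<inter> b1) \<inter> (a2 \<inter> b2)" using ab by auto
      have c1: "a1 \<inter> b1 \<in> sigma_sets \<Omega> GE" by (rule sigma_sets_Int2[OF PGS(2) h1 h3])
      have c2: "a2 \<inter> b2 \<in> sigma_sets \<Omega> GO" by (rule sigma_sets_Int2[OF PGS(3) h2 h4])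
      show "a \<inter> b \<in> C" unfolding C_def e using c1 c2 by blast
    qed
    have stA: "Int_stable {A i}" unfolding Int_stable_def by auto
    have ind3: "indep_set (sigma_sets \<Omega> {A i}) (sigma_sets \<Omega> C)"
      using indep_set_sigma_sets[OF indAC stA stC] unfolding \<Omega>_def .
    have GiC: "Gi \<subseteq> C"
    proof
      fix x assume "x \<in> Gi"
      then show "x \<in> C"
      proof (unfold Gi_def, elim UnE)
        assume x: "x \<in> ev_of M (E r i) (count_space UNIV)"
        then have "x \<in> sigma_sets \<Omega> GE" unfolding GE_def using i by blast
        moreover have "x \<subseteq> \<Omega>" using x unfolding ev_of_def \<Omega>_def by auto
        ultimately show "x \<in> C" unfolding C_def using sigma_sets_top[of \<Omega> GO]
          by (intro CollectI exI[of _ x] exI[of _ \<Omega>]) auto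
      next
        assume x: "x \<in> (\<Union>q\<in>{1..}. ev_of M (h r i q) borel)"
        then have "x \<in> sigma_sets \<Omega> GO" unfolding GO_def fav_other_gen_def using i by blast
        moreover have "x \<subseteq> \<Omega>" using x unfolding ev_of_def \<Omega>_def by auto
        ultimately show "x \<in> C" unfolding C_def using sigma_sets_top[of \<Omega> GE]
          by (intro CollectI exI[of _ \<Omega>] exI[of _ x]) auto
      qed
    qed
    have sGiC: "sigma_sets \<Omega> Gi \<subseteq> sigma_sets \<Omega> C"
      using GiC by (intro sigma_sets_mono) auto
    define N where "N = sigma \<Omega> Gi"
    have spN: "space N = \<Omega>" unfolding N_def by (simp add: space_measure_of_conv)
    have sN: "sets N = sigma_sets \<Omega> Gi" unfolding N_def using PGS(4) by (simp add: sets_measure_of)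
    have EN: "E r i \<in> measurable N (count_space UNIV)"
      unfolding measurable_def spN sN
    proof safe
      fix B :: "nat set"
      have "E r i -` B \<inter> \<Omega> \<in> Gi" unfolding Gi_def ev_of_def \<Omega>_def by auto
      then show "E r i -` B \<inter> \<Omega> \<in> sigma_sets \<Omega> Gi" by blast
    qed auto
    have hN: "\<forall>q\<ge>1. h r i q \<in> borel_measurable N"
    proof (intro allI impI)
      fix q :: nat assume q: "q \<ge> 1"
      show "h r i q \<in> borel_measurable N"
        unfolding measurable_def spN sN
      proof safe
        fix B :: "'v set" assume "B \<in> sets borel"
        then have "h r i q -` B \<inter> \<Omega> \<in> Gi" unfolding Gi_def ev_of_def \<Omega>_def using q by blast
        then show "h r i q -` B \<inter> \<Omega> \<in> sigma_sets \<Omega> Gi" by blast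
      qed auto
    qed
    have hc[measurable]: "(\<lambda>\<omega>. fav_hcheck M K stoch E h r i \<omega>) \<in> borel_measurable N"
      by (rule hcheck_meas[where E=E and h=h and t=r and i=i, OF EN hN])
    have YN: "Y i \<in> borel_measurable N" unfolding Y_def by measurable
    have sub: "subalgebra M N" unfolding subalgebra_def spN sN \<Omega>_def
      using sGiC indep_setD_ev2[OF ind3] unfolding \<Omega>_def by blast
    have YM: "Y i \<in> borel_measurable M" by (rule measurable_from_subalg[OF sub YN])
    have X1: "sigma_sets (space M) {indicator (A i) -` B \<inter> space M | B. B \<in> sets (borel :: real measure)}
        \<subseteq> sigma_sets \<Omega> {A i}"
    proof (unfold \<Omega>_def[symmetric], rule sigma_sets_mono, safe)
      fix B :: "real set"
      have AO: "A i \<subseteq> \<Omega>" unfolding A_def by auto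
      have eq: "indicator (A i) -` B \<inter> \<Omega> = (if 1 \<in> B then A i else {}) \<union> (if 0 \<in> B then \<Omega> - A i else {})"
        using AO by (auto simp: indicator_def of_bool_def split: if_splits)
      have "A i \<in> sigma_sets \<Omega> {A i}" by blast
      moreover have "\<Omega> - A i \<in> sigma_sets \<Omega> {A i}" by (rule sigma_sets.Compl) blast
      ultimately show "indicator (A i) -` B \<inter> \<Omega> \<in> sigma_sets \<Omega> {A i}"
        unfolding eq by (intro sigma_sets_Un) (auto intro: sigma_sets.Empty)
    qed
    have X2: "sigma_sets (space M) {Y i -` B \<inter> space M | B. B \<in> sets (borel :: real measure)}
        \<subseteq> sigma_sets \<Omega> C"
    proof (unfold \<Omega>_def[symmetric], rule sigma_sets_mono, safe)
      fix B :: "real set" assume "B \<in> sets borel"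
      then have "Y i -` B \<inter> space N \<in> sets N" by (rule measurable_sets[OF YN])
      then show "Y i -` B \<inter> \<Omega> \<in> sigma_sets \<Omega> C" using sGiC spN sN by auto
    qed
    have iv: "indep_var borel (indicator (A i)) borel (Y i)"
      unfolding indep_var_eq
    proof (intro conjI)
      show "random_variable borel (indicator (A i) :: 'a \<Rightarrow> real)" using Aev by simp
      show "random_variable borel (Y i)" by (rule YM)
      show "indep_set (sigma_sets (space M) {indicator (A i) -` B \<inter> space M | B. B \<in> sets (borel :: real measure)})
         (sigma_sets (space M) {Y i -` B \<inter> space M | B. B \<in> sets (borel :: real measure)})"
        using ind3 X1 X2 unfolding indep_sets2_eq by blast
    qed
    have intI: "integrable M (indicator (A i) :: 'a \<Rightarrow> real)"
      using Aev sets.sets_into_space[OF Aev] by (simp add: integrable_indicator_iff Int_absorb2 less_top[symmetric])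
    have intY: "integrable M (Y i)" using finite_exp r1 i unfolding Y_def by blast
    have "integral\<^sup>L M (indicator (A i) :: 'a \<Rightarrow> real) = prob (A i)"
      using Aev sets.sets_into_space by (simp add: Int_absorb2)
    then show ?thesis
      using indep_var_lebesgue_integral[OF iv intI intY] indep_var_integrable[OF iv intI intY] by simp
  qed
  define c where "c = eta\<^sup>2 * real s / (real n + 1)\<^sup>2"
  define R where "R \<omega> = c * (\<Sum>i\<in>{1..n}. indicator (A i) \<omega> * Y i \<omega>)" for \<omega>
  define g where "g \<omega> = (norm (fav_mu M n s K eta stoch w0 E S h (Suc t) \<omega>
                                  - fav_mu M n s K eta stoch w0 E S h t \<omega>))\<^sup>2" for \<omega>
  have intR: "integrable M R" unfolding R_def
  proof (intro integrable_mult_right)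
    show "integrable M (\<lambda>x. \<Sum>i = 1..n. indicator (A i) x * Y i x)"
      by (rule Bochner_Integration.integrable_sum) (use indepY in blast)
  qed
  have intRv: "integral\<^sup>L M R = c * (real s / real n) * (\<Sum>i\<in>{1..n}. integral\<^sup>L M (Y i))"
  proof -
    have "integral\<^sup>L M R = c * (\<Sum>i\<in>{1..n}. integral\<^sup>L M (\<lambda>\<omega>. indicator (A i) \<omega> * Y i \<omega>))"
      unfolding R_def
      by (subst integral_mult_right_zero, subst Bochner_Integration.integral_sum) (use indepY in blast, simp)
    also have "\<dots> = c * (\<Sum>i\<in>{1..n}. (real s / real n) * integral\<^sup>L M (Y i))"
      using indepY probA by (intro arg_cong[where f="\<lambda>x. c * x"] sum.cong) auto
    finally show ?thesis by (simp add: sum_distrib_left mult.assoc)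
  qed
  have AEgR: "AE \<omega> in M. g \<omega> \<le> R \<omega>"
    using AEU AE_space
  proof eventually_elim
    fix \<omega> assume "S r \<omega> \<in> U" and \<omega>sp: "\<omega> \<in> space M"
    define T where "T = S r \<omega>"
    have Tsub: "T \<subseteq> {1..n}" and cardT: "card T = s" using \<open>S r \<omega> \<in> U\<close> unfolding U_def T_def by auto
    have fT: "finite T" using Tsub finite_subset by blast
    define w where "w = fst (fav_state M s K eta stoch w0 E S h t \<omega>)"
    define wc where "wc = snd (fav_state M s K eta stoch w0 E S h t \<omega>)"
    define H where "H i = fav_hcheck M K stoch E h (Suc t) i \<omega>" for i
    define wn where "wn = (1 / (real s + 1)) *\<^sub>R (w + (\<Sum>i\<in>T. (wc i - eta *\<^sub>R H i)))"
    have st: "fav_state M s K eta stoch w0 E S h (Suc t) \<omega> = (wn, \<lambda>i. if i \<in> T then wn else wc i)"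
      unfolding wn_def w_def wc_def H_def T_def r_def by (simp add: Let_def)
    have "fav_mu M n s K eta stoch w0 E S h (Suc t) \<omega> - fav_mu M n s K eta stoch w0 E S h t \<omega>
       = (1 / (real n + 1)) *\<^sub>R ((wn + (\<Sum>i\<in>{1..n}. if i \<in> T then wn else wc i)) - (w + (\<Sum>i\<in>{1..n}. wc i)))"
      unfolding fav_mu_def st by (simp add: w_def wc_def scaleR_diff_right)
    also have "\<dots> = (1 / (real n + 1)) *\<^sub>R (- (eta *\<^sub>R (\<Sum>i\<in>T. H i)))"
      unfolding wn_def by (subst diff_alg[OF _ Tsub cardT]) auto
    finally have d: "fav_mu M n s K eta stoch w0 E S h (Suc t) \<omega> - fav_mu M n s K eta stoch w0 E S h t \<omega>
       = (1 / (real n + 1)) *\<^sub>R (- (eta *\<^sub>R (\<Sum>i\<in>T. H i)))" .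
    have "g \<omega> = (eta\<^sup>2 / (real n + 1)\<^sup>2) * (norm (\<Sum>i\<in>T. H i))\<^sup>2"
      unfolding g_def d by (simp add: power_mult_distrib power_divide)
    also have "\<dots> \<le> (eta\<^sup>2 / (real n + 1)\<^sup>2) * (real s * (\<Sum>i\<in>T. (norm (H i))\<^sup>2))"
      using norm_sum_sq_le[OF fT, of H] cardT by (intro mult_left_mono) auto
    also have "(\<Sum>i\<in>T. (norm (H i))\<^sup>2) = (\<Sum>i\<in>{1..n}. indicator (A i) \<omega> * Y i \<omega>)"
    proof -
      have "(\<Sum>i\<in>{1..n}. indicator (A i) \<omega> * Y i \<omega>) = (\<Sum>i\<in>{1..n}. if i \<in> T then Y i \<omega> else 0)"
        using \<omega>sp by (intro sum.cong) (auto simp: A_def T_def \<Omega>_def indicator_def)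
      also have "\<dots> = (\<Sum>i\<in>T. Y i \<omega>)"
        using Tsub by (simp add: sum.If_cases Int_absorb1)
      finally show ?thesis by (simp add: Y_def H_def r_def)
    qed
    finally show "g \<omega> \<le> R \<omega>" unfolding R_def c_def by (simp add: mult_ac)
  qed
  have key: "integral\<^sup>L M g \<le> c * (real s / real n) * (\<Sum>i\<in>{1..n}. integral\<^sup>L M (Y i))"
  proof (cases "integrable M g")
    case True
    then show ?thesis using integral_mono_AE[OF True intR AEgR] intRv by simp
  next
    case False
    have "0 \<le> c" unfolding c_def by simp
    moreover have "0 \<le> (\<Sum>i\<in>{1..n}. integral\<^sup>L M (Y i))"
      unfolding Y_def by (intro sum_nonneg integral_nonneg_AE) auto
    ultimately show ?thesis using False not_integrable_integral_eq[OF False] by simp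
  qed
  have eq: "c * (real s / real n) = real s ^ 2 * eta ^ 2 / (real n * (real n + 1) ^ 2)"
    unfolding c_def by (simp add: power2_eq_square mult_ac)
  show ?thesis using key unfolding eq g_def Y_def r_def .
qed

end
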